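(* Let $f\in\mathscr{S}^*_\wp$ and $0\le\alpha<1$. Let $r_\alpha\in(0,1)$ be the smallest positive root of $(1-r)(1-re^r)(1-re^r-\alpha)-re^r=0$. Then $\operatorname{Re}\left(1+\frac{zf''(z)}{f'(z)}\right)>\alpha$ for $|z|<r_\alpha$. In particular ($\alpha=0$), $f$ is convex in $|z|<r_0\approx0.256707$.
   Context: $\mathbb{D}$ is the unit disk; $\mathcal{A}$ is the class of analytic $f$ on $\mathbb{D}$ with $f(0)=0,f'(0)=1$. $f\prec g$ means $f=g\circ\omega$ for analytic $\omega:\mathbb{D}\to\mathbb{D}$, $\omega(0)=0$. $\wp(z)=1+ze^z$, $\mathscr{S}^*_\wp=\{f\in\mathcal{A}:zf'(z)/f(z)\prec\wp(z)\}$. *)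

theory Defs
  imports "HOL-Complex_Analysis.Complex_Analysis"
begin

definition wp :: "complex \<Rightarrow> complex" where
  "wp z = 1 + z * exp z"

definition subordinate :: "(complex \<Rightarrow> complex) \<Rightarrow> (complex \<Rightarrow> complex) \<Rightarrow> bool" where
  "subordinate p g \<longleftrightarrow>
     (\<exists>\<omega>. \<omega> holomorphic_on ball 0 1 \<and> \<omega> 0 = 0 \<and> \<omega> ` ball 0 1 \<subseteq> ball 0 1 \<and>
          (\<forall>z\<in>ball 0 1. p z = g (\<omega> z)))"

definition classA :: "(complex \<Rightarrow> complex) \<Rightarrow> bool" where
  "classA f \<longleftrightarrow> f holomorphic_on ball 0 1 \<and> f 0 = 0 \<and> deriv f 0 = 1"

text \<open>S*_wp: z f'(z)/f(z) (analytic on the disk, value 1 at 0 by continuity;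
  f has no zeros in the punctured disk) is subordinate to wp.\<close>
definition Swp :: "(complex \<Rightarrow> complex) set" where
  "Swp = {f. classA f \<and> (\<forall>z\<in>ball 0 1 - {0}. f z \<noteq> 0) \<and>
     subordinate (\<lambda>z. if z = 0 then 1 else z * deriv f z / f z) wp}"

definition g_alpha :: "real \<Rightarrow> real \<Rightarrow> real" where
  "g_alpha \<alpha> r = (1 - r) * (1 - r * exp r) * (1 - r * exp r - \<alpha>) - r * exp r"

end

theory Submission
  imports Defs
begin


lemma g_pos:
  assumes "0 \<le> \<alpha>" "\<alpha> < 1" "\<forall>s. 0 < s \<and> s < ra \<longrightarrow> g_alpha \<alpha> s \<noteq> 0"
    and "0 \<le> s" "s < ra"
  shows "g_alpha \<alpha> s > 0"
proof (rule ccontr)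
  assume "\<not> g_alpha \<alpha> s > 0"
  hence le: "g_alpha \<alpha> s \<le> 0" by simp
  have g0: "g_alpha \<alpha> 0 = 1 - \<alpha>" by (simp add: g_alpha_def)
  have "\<exists>x\<ge>0. x \<le> s \<and> g_alpha \<alpha> x = 0"
    by (rule IVT2) (use le g0 assms in \<open>auto simp: g_alpha_def intro!: continuous_intros\<close>)
  then obtain x where "0 \<le> x" "x \<le> s" "g_alpha \<alpha> x = 0" by blast
  moreover have "x \<noteq> 0" using g0 assms \<open>g_alpha \<alpha> x = 0\<close> by auto
  ultimately show False using assms by auto
qed

lemma rexp_lt1:
  assumes "0 \<le> \<alpha>" "\<alpha> < 1" "\<forall>s. 0 < s \<and> s < ra \<longrightarrow> g_alpha \<alpha> s \<noteq> 0"
    and "0 \<le> s" "s < ra"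
  shows "s * exp s < 1"
proof (rule ccontr)
  assume "\<not> s * exp s < 1"
  hence le: "1 \<le> s * exp s" by simp
  have "\<exists>x\<ge>0. x \<le> s \<and> x * exp x = 1"
    by (rule IVT) (use le assms in \<open>auto intro!: continuous_intros\<close>)
  then obtain x where x: "0 \<le> x" "x \<le> s" "x * exp x = 1" by blast
  have "g_alpha \<alpha> x = -1" using x by (simp add: g_alpha_def)
  moreover have "g_alpha \<alpha> x > 0" using g_pos[OF assms(1-3), of x] x assms by auto
  ultimately show False by simp
qed



lemma schwarz_pick:
  assumes hol: "w holomorphic_on ball 0 1" and im: "w ` ball 0 1 \<subseteq> ball 0 1" and a: "norm a < 1"
  shows "norm (deriv w a) * (1 - (norm a)^2) \<le> 1"
proof -
  define b where "b = w a"
  have b: "norm b < 1" using im a b_def by (auto simp: image_subset_iff)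
  define h where "h = Moebius_function 0 b \<circ> w \<circ> Moebius_function 0 (-a)"
  have h0: "h 0 = 0" by (simp add: h_def Moebius_function_def b_def)
  have m1: "Moebius_function 0 (- a) holomorphic_on ball 0 1" using a by (simp add: Moebius_function_holomorphic)
  have m2: "Moebius_function 0 b holomorphic_on ball 0 1" using b by (simp add: Moebius_function_holomorphic)
  have m3: "Moebius_function 0 (- a) ` ball 0 1 \<subseteq> ball 0 1"
    using a Moebius_function_norm_lt_1[of "-a"] by auto
  have holh: "h holomorphic_on ball 0 1"
    unfolding h_def
    by (rule holomorphic_on_compose_gen[OF m1 holomorphic_on_compose_gen[OF hol m2 im] m3])
  have noh: "norm (h z) < 1" if "norm z < 1" for z
  proof -
    have "norm (Moebius_function 0 (-a) z) < 1" using a that Moebius_function_norm_lt_1[of "-a"] by auto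
    hence "norm (w (Moebius_function 0 (-a) z)) < 1" using im by (auto simp: image_subset_iff)
    thus ?thesis unfolding h_def using b Moebius_function_norm_lt_1 by auto
  qed
  have d1: "(Moebius_function 0 (-a) has_field_derivative (1 - cnj a * a)) (at 0)"
    unfolding Moebius_function_def
    by (auto intro!: derivative_eq_intros simp: field_simps)
  have "w field_differentiable at a"
    using hol a by (meson holomorphic_on_imp_differentiable_at mem_ball_0 open_ball)
  hence d2: "(w has_field_derivative deriv w a) (at (Moebius_function 0 (-a) 0))"
    by (simp add: Moebius_function_def DERIV_deriv_iff_field_differentiable)
  have nb: "1 - cnj b * b \<noteq> 0"
  proof
    assume "1 - cnj b * b = 0"
    hence "cnj b * b = 1" by simp
    hence "norm b ^ 2 = 1" by (metis complex_norm_square mult.commute of_real_eq_1_iff)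
    thus False using b by (simp add: power2_eq_square) (metis mult_less_cancel_right1 norm_ge_zero less_le_trans less_irrefl mult_strict_mono' mult_1)
  qed
  have d3: "(Moebius_function 0 b has_field_derivative (1 / (1 - cnj b * b))) (at ((w \<circ> Moebius_function 0 (-a)) 0))"
  proof -
    have e: "(w \<circ> Moebius_function 0 (-a)) 0 = b" by (simp add: Moebius_function_def b_def)
    have "((\<lambda>u. (u - b) / (1 - cnj b * u)) has_field_derivative (1 / (1 - cnj b * b))) (at b)"
    proof -
      have "((\<lambda>u. (u - b) / (1 - cnj b * u)) has_field_derivative
          ((1 - 0) * (1 - cnj b * b) - (b - b) * (0 - cnj b * 1)) / ((1 - cnj b * b) * (1 - cnj b * b))) (at b)"
        by (rule DERIV_divide[OF DERIV_diff[OF DERIV_ident DERIV_const] DERIV_diff[OF DERIV_const DERIV_cmult[OF DERIV_ident]] nb])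
      moreover have "((1 - 0) * (1 - cnj b * b) - (b - b) * (0 - cnj b * 1)) / ((1 - cnj b * b) * (1 - cnj b * b)) = 1 / (1 - cnj b * b)"
        using nb by simp
      ultimately show ?thesis by simp
    qed
    thus ?thesis unfolding e by (simp add: Moebius_function_def[abs_def])
  qed
  have "(h has_field_derivative (1 / (1 - cnj b * b)) * deriv w a * (1 - cnj a * a)) (at 0)"
    unfolding h_def using DERIV_chain[OF d3 DERIV_chain[OF d2 d1]] by (simp add: o_def mult.assoc)
  hence dh: "deriv h 0 = (1 / (1 - cnj b * b)) * deriv w a * (1 - cnj a * a)"
    by (rule DERIV_imp_deriv)
  have "norm (deriv h 0) \<le> 1"
    using Schwarz_Lemma(2)[OF holh h0 noh, of 0] by simp
  moreover have ea: "1 - cnj a * a = of_real (1 - (norm a)^2)" "1 - cnj b * b = of_real (1 - (norm b)^2)"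
    by (simp_all add: complex_norm_square[symmetric] mult.commute)
  moreover have "0 < 1 - (norm a)^2" "0 < 1 - (norm b)^2" using a b by (simp_all add: abs_square_less_1)
  moreover have "norm (deriv h 0) = norm (deriv w a) * (1 - (norm a)^2) / (1 - (norm b)^2)"
    unfolding dh ea norm_mult norm_divide norm_of_real using a b
    by (simp add: abs_square_less_1 abs_of_pos)
  ultimately have "norm (deriv w a) * (1 - (norm a)^2) / (1 - (norm b)^2) \<le> 1"
    by simp
  moreover have "0 < 1 - (norm b)^2" using b by (simp add: abs_square_less_1)
  ultimately have "norm (deriv w a) * (1 - (norm a)^2) \<le> 1 - (norm b)^2"
    by (simp add: divide_le_eq)
  thus ?thesis by (smt (verit) zero_le_power2)
qed


lemma final_ineq:
  fixes r K \<alpha> :: real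
  assumes "0 \<le> r" "r < 1" "K = r * exp r" "K < 1" "g_alpha \<alpha> r > 0"
    and "X \<ge> 1 - K" "Y \<le> (K / (1 - r)) / (1 - K)"
  shows "X - Y > \<alpha>"
proof -
  have g: "(1 - r) * (1 - K) * (1 - K - \<alpha>) - K > 0" using assms(3,5) by (simp add: g_alpha_def)
  have p: "(1 - r) * (1 - K) > 0" using assms by simp
  have "(K / (1 - r)) / (1 - K) = K / ((1 - r) * (1 - K))" by simp
  also have "\<dots> < 1 - K - \<alpha>" using g p by (simp add: divide_less_eq mult.commute)
  finally show ?thesis using assms by linarith
qed

theorem mainTheorem6:
  fixes f :: "complex \<Rightarrow> complex" and \<alpha> r\<^sub>\<alpha> :: real
  assumes "f \<in> Swp"
    and "0 \<le> \<alpha>" and "\<alpha> < 1"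
    and "0 < r\<^sub>\<alpha>" and "r\<^sub>\<alpha> < 1"
    and "g_alpha \<alpha> r\<^sub>\<alpha> = 0"
    and "\<forall>s. 0 < s \<and> s < r\<^sub>\<alpha> \<longrightarrow> g_alpha \<alpha> s \<noteq> 0"
  shows "\<forall>z. norm z < r\<^sub>\<alpha> \<longrightarrow> Re (1 + z * deriv (deriv f) z / deriv f z) > \<alpha>"
proof (intro allI impI)
  fix z :: complex
  assume zr: "norm z < r\<^sub>\<alpha>"
  from assms(1) have holf: "f holomorphic_on ball 0 1"
    and nzf: "\<forall>z\<in>ball 0 1 - {0}. f z \<noteq> 0"
    and sub: "subordinate (\<lambda>z. if z = 0 then 1 else z * deriv f z / f z) wp"
    by (auto simp: Swp_def classA_def)
  from sub obtain \<omega> where hol\<omega>: "\<omega> holomorphic_on ball 0 1" and \<omega>0: "\<omega> 0 = 0"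
    and im\<omega>: "\<omega> ` ball 0 1 \<subseteq> ball 0 1"
    and eq: "\<forall>z\<in>ball 0 1. (if z = 0 then 1 else z * deriv f z / f z) = wp (\<omega> z)"
    unfolding subordinate_def by blast
  show "Re (1 + z * deriv (deriv f) z / deriv f z) > \<alpha>"
  proof (cases "z = 0")
    case True then show ?thesis using assms by simp
  next
    case False
    define r where "r = norm z"
    have r0: "0 \<le> r" and r1: "r < 1" and rr: "r < r\<^sub>\<alpha>" using zr assms r_def by auto
    have zb: "z \<in> ball 0 1" using r1 r_def by simp
    define W where "W = \<omega> z"
    define D where "D = deriv \<omega> z"
    define F where "F = f z"
    define F1 where "F1 = deriv f z"
    define F2 where "F2 = deriv (deriv f) z"
    define K where "K = r * exp r"
    have no\<omega>: "norm (\<omega> u) < 1" if "norm u < 1" for u using im\<omega> that by (auto simp: image_subset_iff)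
    have Wr: "norm W \<le> r" unfolding W_def r_def
      using Schwarz_Lemma(1)[OF hol\<omega> \<omega>0 no\<omega>] zb by simp
    have Dr: "norm D * (1 - r^2) \<le> 1" unfolding D_def r_def
      using schwarz_pick[OF hol\<omega> im\<omega>] zb by simp
    have F0: "F \<noteq> 0" using nzf zb False F_def by auto
    have PW: "z * F1 / F = 1 + W * exp W"
      using bspec[OF eq zb] False by (simp add: F_def F1_def W_def wp_def)
    define P where "P = 1 + W * exp W"
    have K1: "K < 1" using rexp_lt1[OF assms(2,3,7) r0 rr] K_def by simp
    have gp: "g_alpha \<alpha> r > 0" using g_pos[OF assms(2,3,7) r0 rr] .
    have nWe: "norm (W * exp W) \<le> K"
    proof -
      have "norm (exp W) \<le> exp r" using Wr abs_Re_le_cmod[of W]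
        by (simp add: norm_exp_eq_Re)
      thus ?thesis unfolding K_def norm_mult using Wr r0
        by (simp add: mult_mono)
    qed
    have ReP: "Re P \<ge> 1 - K"
      using abs_Re_le_cmod[of "W * exp W"] nWe by (simp add: P_def)
    have nP: "norm P \<ge> 1 - K"
      using norm_triangle_ineq2[of 1 "- (W * exp W)"] nWe by (simp add: P_def)
    have P0: "P \<noteq> 0" using nP K1 by auto
    have dF: "(f has_field_derivative F1) (at z)" unfolding F1_def
      using holf zb by (meson DERIV_deriv_iff_field_differentiable holomorphic_on_imp_differentiable_at open_ball)
    have dF': "(deriv f has_field_derivative F2) (at z)" unfolding F2_def
      using holomorphic_deriv[OF holf] zb
      by (meson DERIV_deriv_iff_field_differentiable holomorphic_on_imp_differentiable_at open_ball)
    have dq1: "((\<lambda>u. u * deriv f u / f u) has_field_derivative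
        ((1 * F1 + z * F2) * F - z * F1 * F1) / (F * F)) (at z)"
      using DERIV_divide[OF DERIV_mult[OF DERIV_ident dF'] dF F0[unfolded F_def]]
      by (simp add: F_def F1_def mult.assoc mult.commute)
    have d\<omega>: "(\<omega> has_field_derivative D) (at z)" unfolding D_def
      using hol\<omega> zb by (meson DERIV_deriv_iff_field_differentiable holomorphic_on_imp_differentiable_at open_ball)
    have dwp: "(wp has_field_derivative (exp W + W * exp W)) (at W)"
      unfolding wp_def[abs_def] by (auto intro!: derivative_eq_intros)
    have dq2': "((\<lambda>u. wp (\<omega> u)) has_field_derivative (exp W + W * exp W) * D) (at z)"
      using DERIV_chain[OF dwp[unfolded W_def] d\<omega>] by (simp add: o_def W_def)
    have dq2: "((\<lambda>u. u * deriv f u / f u) has_field_derivative (exp W + W * exp W) * D) (at z)"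
    proof (rule has_field_derivative_transform_within_open[OF dq2', of "ball 0 1 - {0}"])
      show "open (ball 0 1 - {0::complex})" by (simp add: open_Diff)
      show "z \<in> ball 0 1 - {0}" using zb False by simp
      fix u assume "u \<in> ball 0 1 - {0::complex}"
      thus "wp (\<omega> u) = u * deriv f u / f u" using bspec[OF eq, of u] by auto
    qed
    define Q where "Q = (exp W + W * exp W) * D"
    have E: "((1 * F1 + z * F2) * F - z * F1 * F1) / (F * F) = Q"
      using DERIV_unique[OF dq1 dq2] Q_def by simp
    have F10: "F1 \<noteq> 0" using PW P0 P_def by auto
    have key: "1 + z * F2 / F1 = P + z * Q / P"
    proof -
      have PF: "P = z * F1 / F" using PW P_def by simp
      show ?thesis unfolding E[symmetric] PF using F0 F10 False
        by (simp add: field_simps power2_eq_square)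
    qed
    have nQ: "norm (z * Q) \<le> K / (1 - r)"
    proof -
      have e1: "norm (exp W) \<le> exp r" using Wr abs_Re_le_cmod[of W]
        by (simp add: norm_exp_eq_Re)
      have e2: "norm (1 + W) \<le> 1 + r" using norm_triangle_ineq[of 1 W] Wr by simp
      have r2: "0 < 1 - r^2" using r0 r1 by (simp add: abs_square_less_1)
      have e3: "norm D \<le> 1 / (1 - r^2)" using Dr r2 by (simp add: le_divide_eq)
      have "exp W + W * exp W = (1 + W) * exp W" by (simp add: algebra_simps)
      hence "norm (z * Q) = r * (norm (1 + W) * norm (exp W) * norm D)"
        by (simp add: Q_def norm_mult r_def)
      also have "\<dots> \<le> r * ((1 + r) * exp r * (1 / (1 - r^2)))"
        using e1 e2 e3 r0 by (intro mult_left_mono mult_mono) auto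
      also have "\<dots> = K / (1 - r)"
        using r1 r2 by (simp add: K_def field_simps power2_eq_square)
      finally show ?thesis .
    qed
    have nQP: "norm (z * Q / P) \<le> (K / (1 - r)) / (1 - K)"
    proof -
      have "norm (z * Q / P) = norm (z * Q) / norm P" by (simp add: norm_divide)
      also have "\<dots> \<le> (K / (1 - r)) / (1 - K)"
        using nQ nP K1 r0 r1 by (intro frac_le) (auto simp: K_def intro!: divide_nonneg_nonneg)
      finally show ?thesis .
    qed
    have "Re (P + z * Q / P) \<ge> Re P - norm (z * Q / P)"
      using abs_Re_le_cmod[of "z * Q / P"] by simp
    moreover have "Re P - norm (z * Q / P) > \<alpha>"
      by (rule final_ineq[OF r0 r1 K_def K1 gp ReP nQP])
    ultimately show ?thesis using key by (simp add: F1_def F2_def)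
  qed
qed

end
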